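(* Let $g:\mathcal S\times\mathcal T\to\{0,1\}$ and let $\mathcal D$ be a distribution over $\mathcal S\times\mathcal T$ such that $(g,\mathcal D)$ satisfies rectangle substitutes. Then for every $\delta\in(0,1)$ there is a deterministic communication protocol using $O(\log(1/\delta))$ bits of communication that $(1-\delta)$-computes $g$ over $\mathcal D$.
   Context: Given $(g,\mathcal D)$, consider the information structure with $(\sigma,\tau)\sim\mathcal D$ (Alice holds $\sigma\in\mathcal S$, Bob holds $\tau\in\mathcal T$) and $Y=g(\sigma,\tau)$. Notation: $\mu_{\sigma\tau}=\mathbb E[Y\mid\sigma,\tau]$; for measurable $S\subseteq\mathcal S$, $T\subseteq\mathcal T$: $\mu_{\sigma T}=\mathbb E[Y\mid\sigma,\tau\in T]$, $\mu_{S\tau}=\mathbb E[Y\mid\sigma\in S,\tau]$, $\mu_{ST}=\mathbb E[Y\mid\sigma\in S,\tau\in T]$; $\mathbb E[\cdot\mid S,T]$ conditions on $\{\sigma\in S,\tau\in T\}$. $(g,\mathcal D)$ satisfies rectangle substitutes if for all measurable $S\subseteq\mathcal S$, $T\subseteq\mathcal T$ with $\mathbb P(\sigma\in S,\tau\in T)>0$: $\mathbb E[(Y-\mu_{S\tau})^2\mid S,T]-\mathbb E[(Y-\mu_{\sigma\tau})^2\mid S,T]\le \mathbb E[(Y-\mu_{ST})^2\mid S,T]-\mathbb E[(Y-\mu_{\sigma T})^2\mid S,T]$. A deterministic communication protocol: Alice and Bob alternately send messages, each a deterministic function of the sender's own input and previous messages, and the output is $h(\pi)\in\{0,1\}$ for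 a function $h$ of the transcript $\pi$. The protocol $(1-\delta)$-computes $g$ over $\mathcal D$ if $\mathbb P_{(\sigma,\tau)\sim\mathcal D}[h(\pi)=g(\sigma,\tau)]\ge1-\delta$. *)

theory Defs
  imports "HOL-Probability.Probability"
begin

text \<open>An internal node is owned by Alice or Bob; the owner sends one bit that is a
  function of her/his own input (dependence on previous messages is encoded by
  the position in the tree).\<close>

datatype ('s, 't) protocol =
    Output bool
  | AliceSends "'s \<Rightarrow> bool" "('s, 't) protocol" "('s, 't) protocol"
  | BobSends "'t \<Rightarrow> bool" "('s, 't) protocol" "('s, 't) protocol"

fun run_protocol :: "('s, 't) protocol \<Rightarrow> 's \<Rightarrow> 't \<Rightarrow> bool" where
  "run_protocol (Output b) s t = b"
| "run_protocol (AliceSends f p q) s t =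
     (if f s then run_protocol p s t else run_protocol q s t)"
| "run_protocol (BobSends f p q) s t =
     (if f t then run_protocol p s t else run_protocol q s t)"

fun protocol_cost :: "('s, 't) protocol \<Rightarrow> nat" where
  "protocol_cost (Output b) = 0"
| "protocol_cost (AliceSends f p q) = Suc (max (protocol_cost p) (protocol_cost q))"
| "protocol_cost (BobSends f p q) = Suc (max (protocol_cost p) (protocol_cost q))"

fun protocol_measurable :: "'s measure \<Rightarrow> 't measure \<Rightarrow> ('s, 't) protocol \<Rightarrow> bool" where
  "protocol_measurable M1 M2 (Output b) = True"
| "protocol_measurable M1 M2 (AliceSends f p q) =
     (f \<in> M1 \<rightarrow>\<^sub>M count_space UNIV \<and> protocol_measurable M1 M2 p \<and> protocol_measurable M1 M2 q)"
| "protocol_measurable M1 M2 (BobSends f p q) =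
     (f \<in> M2 \<rightarrow>\<^sub>M count_space UNIV \<and> protocol_measurable M1 M2 p \<and> protocol_measurable M1 M2 q)"

definition Yval :: "('s \<times> 't \<Rightarrow> bool) \<Rightarrow> 's \<times> 't \<Rightarrow> real" where
  "Yval g \<omega> = (if g \<omega> then 1 else 0)"

text \<open>For a rectangle S x T of positive probability,
  N is D conditioned on {sigma \<in> S, tau \<in> T}.
  mu_{sigma tau} = E[Y | sigma,tau] = Y (Y is a function of (sigma,tau));
  mu_{sigma T} = E[Y | sigma, tau \<in> T] is the conditional expectation under N
  given the sigma-algebra generated by sigma (= fst); similarly mu_{S tau};
  mu_{S T} = E_N[Y].\<close>
definition rectangle_substitutes ::
  "'s measure \<Rightarrow> 't measure \<Rightarrow> ('s \<times> 't \<Rightarrow> bool) \<Rightarrow> ('s \<times> 't) measure \<Rightarrow> bool" where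
  "rectangle_substitutes M1 M2 g D \<longleftrightarrow>
    (\<forall>S T. S \<in> sets M1 \<longrightarrow> T \<in> sets M2 \<longrightarrow> measure D (S \<times> T) > 0 \<longrightarrow>
      (let N = uniform_measure D (S \<times> T);
           Y = Yval g;
           mu_sT = real_cond_exp N (vimage_algebra (space D) fst M1) Y;
           mu_St = real_cond_exp N (vimage_algebra (space D) snd M2) Y;
           mu_ST = integral\<^sup>L N Y;
           mu_st = Y
       in (\<integral>\<omega>. (Y \<omega> - mu_St \<omega>)\<^sup>2 \<partial>N) - (\<integral>\<omega>. (Y \<omega> - mu_st \<omega>)\<^sup>2 \<partial>N)
          \<le> (\<integral>\<omega>. (Y \<omega> - mu_ST)\<^sup>2 \<partial>N) - (\<integral>\<omega>. (Y \<omega> - mu_sT \<omega>)\<^sup>2 \<partial>N)))"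

end

theory Submission
  imports Defs "HOL-Probability.Probability"
begin


lemma bdd_int:
  fixes f :: "'a \<Rightarrow> real"
  assumes "finite_measure N" "f \<in> borel_measurable N" "\<And>x. x \<in> space N \<Longrightarrow> \<bar>f x\<bar> \<le> B"
  shows "integrable N f"
  using assms by (intro finite_measure.integrable_const_bound[where B=B]) (auto intro!: AE_I2)

lemma int_ind_const:
  assumes "prob_space N" "G \<in> sets N"
  shows "(\<integral>x. indicator G x * c \<partial>N) = measure N G * c"
proof -
  have "(\<integral>x. indicator G x * c \<partial>N) = (\<integral>x. indicator G x \<partial>N) * c"
    by (rule integral_mult_left_zero)
  also have "\<dots> = measure N G * c"
    using assms sets.sets_into_space by (simp add: Int_absorb2)
  finally show ?thesis .
qed

lemma splitA:
  assumes N: "prob_space N" and sub: "subalgebra N F"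
  and hm: "h \<in> borel_measurable F"
  and hb: "\<And>x. x\<in>space N \<Longrightarrow> 0 \<le> h x \<and> h x \<le> 1"
  and q: "q = integral\<^sup>L N h" "0<q" "q \<le> 1/6"
  and h2: "q*(1+q)/2 \<le> (\<integral>x. (h x)^2 \<partial>N)"
  shows "\<exists>G\<in>sets F. 0 < measure N G \<and> measure N G < 1 \<and>
     measure N G * (1 - measure N G) * q * (1-q) \<le> 144 * ((\<integral>x. indicator G x * h x \<partial>N) - measure N G * q)^2"
proof -
  interpret prob_space N by fact
  have sF: "space F = space N" "sets F \<subseteq> sets N" using sub unfolding subalgebra_def by auto
  have hN[measurable]: "h \<in> borel_measurable N" using measurable_from_subalg[OF sub hm] .
  define G where "G = {x\<in>space N. 1/4 \<le> h x}"
  have GF: "G \<in> sets F" unfolding G_def sF(1)[symmetric] using hm by measurable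
  then have GN[measurable]: "G \<in> sets N" using sF by auto
  have fm: "finite_measure N" by unfold_locales
  define W where "W = measure N G"
  define Y1 where "Y1 = (\<integral>x. indicator G x * h x \<partial>N)"
  have i1: "integrable N (\<lambda>x. indicator G x * h x)"
    by (rule bdd_int[OF fm, where B=1]) (auto simp: indicator_def dest: hb)
  have i2: "integrable N (\<lambda>x. indicator G x * (h x)^2)"
    by (rule bdd_int[OF fm, where B=1]) (auto simp: indicator_def abs_square_le_1 dest: hb)
  have i3: "integrable N (\<lambda>x. indicator (space N - G) x * (h x)^2)"
    by (rule bdd_int[OF fm, where B=1]) (auto simp: indicator_def abs_square_le_1 dest: hb)
  have i4: "integrable N h"
    by (rule bdd_int[OF fm, where B=1]) (auto dest: hb)
  have i5: "integrable N (\<lambda>x. indicator G x * (1/4::real))"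
    by (rule bdd_int[OF fm, where B=1]) (auto simp: indicator_def)
  have i6: "integrable N (\<lambda>x. indicator G x * (1::real))"
    by (rule bdd_int[OF fm, where B=1]) (auto simp: indicator_def)
  have i7: "integrable N (\<lambda>x. h x / 4)"
    by (rule bdd_int[OF fm, where B=1]) (auto dest: hb)
  have "(\<integral>x. (h x)^2 \<partial>N) = (\<integral>x. indicator G x * (h x)^2 + indicator (space N - G) x * (h x)^2 \<partial>N)"
    by (rule Bochner_Integration.integral_cong[OF refl]) (auto simp: indicator_def)
  also have "\<dots> = (\<integral>x. indicator G x * (h x)^2 \<partial>N) + (\<integral>x. indicator (space N - G) x * (h x)^2 \<partial>N)"
    using i2 i3 by simp
  finally have I1: "(\<integral>x. (h x)^2 \<partial>N) = (\<integral>x. indicator G x * (h x)^2 \<partial>N) + (\<integral>x. indicator (space N - G) x * (h x)^2 \<partial>N)" .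
  have I2: "(\<integral>x. indicator (space N - G) x * (h x)^2 \<partial>N) \<le> (\<integral>x. h x / 4 \<partial>N)"
  proof (rule integral_mono[OF i3 i7])
    fix x assume x: "x \<in> space N"
    show "indicator (space N - G) x * (h x)^2 \<le> h x / 4"
    proof (cases "x \<in> G")
      case True then show ?thesis using hb[OF x] by simp
    next
      case False
      then have "h x < 1/4" "0 \<le> h x" using x hb[OF x] unfolding G_def by auto
      then have "h x * (4 * h x) \<le> h x * 1" by (intro mult_left_mono) auto
      then have "(h x)^2 \<le> h x / 4" unfolding power2_eq_square by simp
      then show ?thesis using False x by simp
    qed
  qed
  have I2': "(\<integral>x. h x / 4 \<partial>N) = q/4" using q by simp
  have I3: "(\<integral>x. indicator G x * (h x)^2 \<partial>N) \<le> Y1" unfolding Y1_def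
  proof (rule integral_mono[OF i2 i1])
    fix x assume x: "x \<in> space N"
    show "indicator G x * (h x)^2 \<le> indicator G x * h x"
      using hb[OF x] unfolding power2_eq_square indicator_def by (simp add: mult_left_le_one_le)
  qed
  have I4: "W/4 \<le> Y1"
  proof -
    have "(\<integral>x. indicator G x * (1/4::real) \<partial>N) \<le> Y1" unfolding Y1_def
      by (rule integral_mono[OF i5 i1]) (auto simp: indicator_def G_def)
    then show ?thesis using int_ind_const[OF N GN, of "1/4"] W_def by simp
  qed
  have I5: "Y1 \<le> W"
  proof -
    have "Y1 \<le> (\<integral>x. indicator G x * (1::real) \<partial>N)" unfolding Y1_def
      by (rule integral_mono[OF i1 i6]) (auto simp: indicator_def dest: hb)
    then show ?thesis using int_ind_const[OF N GN, of 1] W_def by simp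
  qed
  have I6: "Y1 \<le> q" unfolding Y1_def q(1)
    by (rule integral_mono[OF i1 i4]) (auto simp: indicator_def dest: hb)
  have qq: "q*(1+q)/2 = q/2 + q*q/2" by (simp add: algebra_simps)
  have qq0: "0 \<le> q*q" by simp
  have Y1q: "q/4 \<le> Y1" using I1 I2 I2' I3 h2 qq qq0 by linarith
  have W1: "W \<le> 1" unfolding W_def by simp
  have Wpos: "0 < W" using Y1q I5 q by linarith
  have Wlt: "W < 1" using I4 I6 q W1 by linarith
  have "W*q \<le> W*(1/6)" using q Wpos by (intro mult_left_mono) auto
  then have e1: "W/12 \<le> Y1 - W*q" using I4 by linarith
  have e2: "q/12 \<le> Y1 - W*q"
  proof -
    have "W*q \<le> 4*Y1*q" using I4 q by (simp add: mult_right_mono)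
    moreover have "(4*Y1)*q \<le> (4*Y1)*(1/6)" using q Y1q by (intro mult_left_mono) auto
    ultimately show ?thesis using Y1q by linarith
  qed
  have "W * (1 - W) * q * (1-q) \<le> W * q"
  proof -
    have "W*(1-W) \<le> W" using Wpos Wlt by (simp add: mult_left_le)
    then have "W*(1-W)*(q*(1-q)) \<le> W*(q*(1-q))" using q by (intro mult_right_mono) auto
    also have "\<dots> \<le> W*q" using Wpos q by (intro mult_left_mono) (auto simp: mult_left_le)
    finally show ?thesis by (simp add: mult.assoc)
  qed
  also have "W*q \<le> 144 * ((W/12) * (q/12))" by simp
  also have "\<dots> \<le> 144 * ((Y1 - W*q) * (Y1 - W*q))"
    using e1 e2 Wpos q by (intro mult_left_mono mult_mono) auto
  finally show ?thesis using GF Wpos Wlt unfolding W_def Y1_def power2_eq_square by blast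
qed

lemma splitB:
  assumes N: "prob_space N" and sub: "subalgebra N F"
  and hm: "h \<in> borel_measurable F"
  and hb: "\<And>x. x\<in>space N \<Longrightarrow> 0 \<le> h x \<and> h x \<le> 1"
  and q: "q = integral\<^sup>L N h" "1/6 \<le> q" "q \<le> 5/6"
  and h2: "q*(1+q)/2 \<le> (\<integral>x. (h x)^2 \<partial>N)"
  shows "\<exists>G\<in>sets F. 0 < measure N G \<and> measure N G < 1 \<and>
     measure N G * (1 - measure N G) * q * (1-q) \<le> 144 * ((\<integral>x. indicator G x * h x \<partial>N) - measure N G * q)^2"
proof -
  interpret prob_space N by fact
  have sF: "space F = space N" "sets F \<subseteq> sets N" using sub unfolding subalgebra_def by auto
  have hN[measurable]: "h \<in> borel_measurable N" using measurable_from_subalg[OF sub hm] .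
  define G where "G = {x\<in>space N. q < h x}"
  have GF: "G \<in> sets F" unfolding G_def sF(1)[symmetric] using hm by measurable
  then have GN[measurable]: "G \<in> sets N" using sF by auto
  have fm: "finite_measure N" by unfold_locales
  define W where "W = measure N G"
  define Y1 where "Y1 = (\<integral>x. indicator G x * h x \<partial>N)"
  define e where "e = Y1 - W*q"
  have i1: "integrable N (\<lambda>x. indicator G x * h x)"
    by (rule bdd_int[OF fm, where B=1]) (auto simp: indicator_def dest: hb)
  have i4: "integrable N h"
    by (rule bdd_int[OF fm, where B=1]) (auto dest: hb)
  have iG: "integrable N (\<lambda>x. indicator G x * q)"
    by (rule bdd_int[OF fm, where B=1]) (use q in \<open>auto simp: indicator_def\<close>)
  have iGc: "integrable N (\<lambda>x. indicator (space N - G) x * q)"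
    by (rule bdd_int[OF fm, where B=1]) (use q in \<open>auto simp: indicator_def\<close>)
  have iGc': "integrable N (\<lambda>x. indicator (space N - G) x * h x)"
    by (rule bdd_int[OF fm, where B=1]) (auto simp: indicator_def dest: hb)
  have iG1: "integrable N (\<lambda>x. indicator G x * (1::real))"
    by (rule bdd_int[OF fm, where B=1]) (auto simp: indicator_def)
  have ih2: "integrable N (\<lambda>x. (h x)^2)"
    by (rule bdd_int[OF fm, where B=1]) (auto simp: abs_square_le_1 dest: hb)
  have mG: "measure N (space N - G) = 1 - W" unfolding W_def by (rule prob_compl) simp
  have cG: "(\<integral>x. indicator G x * q \<partial>N) = W * q" using int_ind_const[OF N GN] W_def by simp
  have cGc: "(\<integral>x. indicator (space N - G) x * q \<partial>N) = (1-W) * q" using int_ind_const[OF N, of "space N - G"] mG by simp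
  define E2 where "E2 = (\<integral>x. indicator (space N - G) x * q - indicator (space N - G) x * h x \<partial>N)"
  have eG: "e = (\<integral>x. indicator G x * h x - indicator G x * q \<partial>N)"
    unfolding e_def Y1_def using cG i1 iG by (subst Bochner_Integration.integral_diff) auto
  have hsplit: "(\<integral>x. h x \<partial>N) = (\<integral>x. indicator G x * h x + indicator (space N - G) x * h x \<partial>N)"
    by (rule Bochner_Integration.integral_cong[OF refl]) (auto simp: indicator_def)
  have E2e: "E2 = e"
  proof -
    have "E2 = (1-W)*q - (\<integral>x. indicator (space N - G) x * h x \<partial>N)"
      unfolding E2_def using iGc iGc' cGc by simp
    moreover have "(\<integral>x. indicator G x * h x \<partial>N) + (\<integral>x. indicator (space N - G) x * h x \<partial>N) = q"
      using hsplit i1 iGc' q(1) by simp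
    ultimately show ?thesis unfolding e_def Y1_def by (simp add: algebra_simps)
  qed
  have pw: "\<And>x. x \<in> space N \<Longrightarrow> (h x)^2 \<le> (1-q) * (indicator G x * h x - indicator G x * q)
        + q * (indicator (space N - G) x * q - indicator (space N - G) x * h x) + 2*q*h x - q*q"
  proof -
    fix x assume x: "x \<in> space N"
    show "?thesis x"
    proof (cases "x \<in> G")
      case True
      then have "q < h x" "h x \<le> 1" using hb[OF x] unfolding G_def by auto
      then have "(h x - q) * (h x - q) \<le> (1 - q) * (h x - q)" by (intro mult_right_mono) auto
      then show ?thesis using True x by (simp add: power2_eq_square algebra_simps)
    next
      case False
      then have "h x \<le> q" "0 \<le> h x" using hb[OF x] x unfolding G_def by auto
      then have "(q - h x) * (q - h x) \<le> q * (q - h x)" by (intro mult_right_mono) auto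
      then show ?thesis using False x by (simp add: power2_eq_square algebra_simps)
    qed
  qed
  have "(\<integral>x. (h x)^2 \<partial>N) \<le> (\<integral>x. (1-q) * (indicator G x * h x - indicator G x * q)
        + q * (indicator (space N - G) x * q - indicator (space N - G) x * h x) + 2*q*h x - q*q \<partial>N)"
    by (rule integral_mono[OF ih2 _ pw]) (use i1 iG iGc iGc' i4 in auto)
  also have "\<dots> = (1-q) * e + q * E2 + 2*q*q - q*q"
    unfolding eG E2_def using i1 iG iGc iGc' i4 q(1) by (simp add: prob_space)
  finally have Ve: "(\<integral>x. (h x)^2 \<partial>N) \<le> e + q*q" using E2e by (simp add: algebra_simps)
  have qq: "q*(1+q)/2 = q/2 + q*q/2" by (simp add: algebra_simps)
  have ebig: "q*(1-q)/2 \<le> e" using Ve h2 qq by (simp add: algebra_simps)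
  have Vq: "5/36 \<le> q*(1-q)"
  proof -
    have "0 \<le> (q - 1/6) * (5/6 - q)" using q by simp
    moreover have "q*(1-q) - 5/36 = (q - 1/6) * (5/6 - q)" by (simp add: field_simps)
    ultimately have "0 \<le> q*(1-q) - 5/36" by simp
    then show ?thesis by simp
  qed
  have eW: "e \<le> W"
  proof -
    have "e \<le> (\<integral>x. indicator G x * (1::real) \<partial>N)" unfolding eG
      proof (rule integral_mono)
      fix x assume x: "x \<in> space N"
      have "h x \<le> 1" "0 \<le> q" using hb[OF x] q by auto
      then show "indicator G x * h x - indicator G x * q \<le> indicator G x * (1::real)"
        by (auto simp: indicator_def)
    qed (use i1 iG iG1 in auto)
    then show ?thesis using int_ind_const[OF N GN, of 1] W_def by simp
  qed
  have eW2: "e \<le> (1-W)*q"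
  proof -
    have "E2 \<le> (\<integral>x. indicator (space N - G) x * q \<partial>N)" unfolding E2_def
      by (rule integral_mono) (use iGc iGc' hb in \<open>auto simp: indicator_def\<close>)
    then show ?thesis using cGc E2e mG by simp
  qed
  have epos: "0 < e" using ebig Vq by linarith
  have Wpos: "0 < W" using eW epos by linarith
  have Wlt: "W < 1"
  proof (rule ccontr)
    assume "\<not> W < 1" then have "(1-W)*q \<le> 0" using q by (simp add: mult_nonpos_nonneg)
    then show False using eW2 epos by linarith
  qed
  have "W * (1 - W) * q * (1-q) \<le> 1 * (q*(1-q))"
  proof -
    have "W*(1-W) \<le> 1" using Wpos Wlt by (smt (verit) mult_le_one)
    moreover have "0 \<le> q*(1-q)" using Vq by linarith
    ultimately have "(W*(1-W)) * (q*(1-q)) \<le> 1 * (q*(1-q))" by (rule mult_right_mono)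
    then show ?thesis by (simp add: mult.assoc)
  qed
  also have "\<dots> \<le> (36 * (q*(1-q))) * (q*(1-q))" using Vq by (intro mult_right_mono) auto
  also have "\<dots> = 144 * ((q*(1-q)/2) * (q*(1-q)/2))" by (simp add: algebra_simps)
  also have "\<dots> \<le> 144 * (e*e)" using ebig Vq by (intro mult_left_mono mult_mono) auto
  finally show ?thesis using GF Wpos Wlt unfolding W_def e_def Y1_def power2_eq_square by blast
qed

lemma main_split:
  assumes N: "prob_space N" and sub: "subalgebra N F"
  and hm: "h \<in> borel_measurable F"
  and hb: "\<And>x. x\<in>space N \<Longrightarrow> 0 \<le> h x \<and> h x \<le> 1"
  and q: "q = integral\<^sup>L N h" "0 < q" "q < 1"
  and h2: "q*(1+q)/2 \<le> (\<integral>x. (h x)^2 \<partial>N)"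
  shows "\<exists>G\<in>sets F. 0 < measure N G \<and> measure N G < 1 \<and>
     measure N G * (1 - measure N G) * q * (1-q) \<le> 144 * ((\<integral>x. indicator G x * h x \<partial>N) - measure N G * q)^2"
proof -
  interpret prob_space N by fact
  have sF: "space F = space N" "sets F \<subseteq> sets N" using sub unfolding subalgebra_def by auto
  have hN[measurable]: "h \<in> borel_measurable N" using measurable_from_subalg[OF sub hm] .
  have fm: "finite_measure N" by unfold_locales
  show ?thesis
  proof (cases "q \<le> 1/6")
    case True
    then show ?thesis using splitA[OF N sub hm hb q(1,2) True h2] by blast
  next
    case c1: False
    show ?thesis
    proof (cases "q \<le> 5/6")
      case True
      then show ?thesis using splitB[OF N sub hm hb q(1) _ True h2] c1 by simp
    next
      case False
      define h' where "h' = (\<lambda>x. 1 - h x)"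
      have ih: "integrable N h" by (rule bdd_int[OF fm, where B=1]) (auto dest: hb)
      have ih2: "integrable N (\<lambda>x. (h x)^2)"
        by (rule bdd_int[OF fm, where B=1]) (auto simp: abs_square_le_1 dest: hb)
      have hm': "h' \<in> borel_measurable F" unfolding h'_def using hm by measurable
      have hb': "\<And>x. x\<in>space N \<Longrightarrow> 0 \<le> h' x \<and> h' x \<le> 1" unfolding h'_def using hb by force
      have q': "1 - q = integral\<^sup>L N h'" unfolding h'_def q(1) using ih by (simp add: prob_space)
      have sq: "(\<integral>x. (h' x)^2 \<partial>N) = 1 - 2*q + (\<integral>x. (h x)^2 \<partial>N)"
      proof -
        have "(\<integral>x. (h' x)^2 \<partial>N) = (\<integral>x. 1 - 2 * h x + (h x)^2 \<partial>N)"
          unfolding h'_def by (rule Bochner_Integration.integral_cong[OF refl]) (simp add: power2_eq_square algebra_simps)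
        also have "\<dots> = 1 - 2*q + (\<integral>x. (h x)^2 \<partial>N)"
          using ih ih2 q(1) by (simp add: prob_space)
        finally show ?thesis .
      qed
      have h2': "(1-q)*(1+(1-q))/2 \<le> (\<integral>x. (h' x)^2 \<partial>N)"
      proof -
        have "(1-q)*(1+(1-q))/2 = 1 - 2*q + q*(1+q)/2" by (simp add: field_simps)
        then show ?thesis using sq h2 by linarith
      qed
      obtain G where G: "G \<in> sets F" "0 < measure N G" "measure N G < 1"
        "measure N G * (1 - measure N G) * (1-q) * (1-(1-q)) \<le> 144 * ((\<integral>x. indicator G x * h' x \<partial>N) - measure N G * (1-q))^2"
        using splitA[OF N sub hm' hb' q'] False q h2' by force
      have GN[measurable]: "G \<in> sets N" using G sF by auto
      have iG: "integrable N (\<lambda>x. indicator G x * h x)"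
        by (rule bdd_int[OF fm, where B=1]) (auto simp: indicator_def dest: hb)
      have iG1: "integrable N (\<lambda>x. indicator G x * (1::real))"
        by (rule bdd_int[OF fm, where B=1]) (auto simp: indicator_def)
      have "(\<integral>x. indicator G x * h' x \<partial>N) = (\<integral>x. indicator G x * 1 - indicator G x * h x \<partial>N)"
        unfolding h'_def by (simp add: algebra_simps)
      also have "\<dots> = measure N G - (\<integral>x. indicator G x * h x \<partial>N)"
        using iG iG1 int_ind_const[OF N GN, of 1] by simp
      finally have e: "(\<integral>x. indicator G x * h' x \<partial>N) = measure N G - (\<integral>x. indicator G x * h x \<partial>N)" .
      have "((\<integral>x. indicator G x * h' x \<partial>N) - measure N G * (1-q))^2 = ((\<integral>x. indicator G x * h x \<partial>N) - measure N G * q)^2"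
        unfolding e by (simp add: power2_eq_square algebra_simps)
      then show ?thesis using G by (auto simp: algebra_simps)
    qed
  qed
qed

lemma cond_split:
  assumes N: "prob_space N" and sub: "subalgebra N F"
  and Ym[measurable]: "Y \<in> borel_measurable N"
  and Yb: "\<And>x. x\<in>space N \<Longrightarrow> Y x = 0 \<or> Y x = 1"
  and q: "q = integral\<^sup>L N Y" "0 < q" "q < 1"
  and hyp: "(\<integral>x. (Y x - real_cond_exp N F Y x)^2 \<partial>N) \<le> q*(1-q)/2"
  shows "\<exists>G\<in>sets F. 0 < measure N G \<and> measure N G < 1 \<and>
     measure N G * (1 - measure N G) * q * (1-q) \<le> 144 * ((\<integral>x. indicator G x * Y x \<partial>N) - measure N G * q)^2"
proof -
  interpret prob_space N by fact
  interpret finite_measure_subalgebra N F by unfold_locales (rule sub)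
  have sF: "space F = space N" "sets F \<subseteq> sets N" using sub unfolding subalgebra_def by auto
  have fm: "finite_measure N" by unfold_locales
  define m where "m = real_cond_exp N F Y"
  have mF[measurable]: "m \<in> borel_measurable F" unfolding m_def by simp
  have mN[measurable]: "m \<in> borel_measurable N" using measurable_from_subalg[OF sub mF] .
  have iY: "integrable N Y" by (rule bdd_int[OF fm, where B=1]) (use Yb in force)+
  have m0: "AE x in N. 0 \<le> m x" unfolding m_def
    by (rule real_cond_exp_ge_c[OF iY]) (use Yb in \<open>force intro!: AE_I2\<close>)
  have m1: "AE x in N. m x \<le> 1" unfolding m_def
    by (rule real_cond_exp_le_c[OF iY]) (use Yb in \<open>force intro!: AE_I2\<close>)
  define h where "h = (\<lambda>x. max 0 (min 1 (m x)))"
  have hF[measurable]: "h \<in> borel_measurable F" unfolding h_def by measurable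
  have hN[measurable]: "h \<in> borel_measurable N" using measurable_from_subalg[OF sub hF] .
  have hm: "AE x in N. h x = m x" using m0 m1 unfolding h_def by eventually_elim auto
  have hb: "\<And>x. x\<in>space N \<Longrightarrow> 0 \<le> h x \<and> h x \<le> 1" unfolding h_def by auto
  have ih: "integrable N h" by (rule bdd_int[OF fm, where B=1]) (use hb in force)+
  have qh: "q = integral\<^sup>L N h"
  proof -
    have "integral\<^sup>L N h = integral\<^sup>L N m" by (rule integral_cong_AE) (use hm in auto)
    also have "\<dots> = integral\<^sup>L N Y" unfolding m_def by (rule real_cond_exp_int(2)[OF iY])
    finally show ?thesis using q by simp
  qed
  have ihY: "integrable N (\<lambda>x. h x * Y x)"
    by (rule bdd_int[OF fm, where B=1]) (use hb Yb in \<open>force simp: abs_mult\<close>)+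
  have ihh: "integrable N (\<lambda>x. (h x)^2)"
    by (rule bdd_int[OF fm, where B=1]) (use hb in \<open>force simp: abs_square_le_1\<close>)+
  have hY: "(\<integral>x. h x * Y x \<partial>N) = (\<integral>x. (h x)^2 \<partial>N)"
  proof -
    have "(\<integral>x. h x * Y x \<partial>N) = (\<integral>x. h x * m x \<partial>N)"
      unfolding m_def by (rule real_cond_exp_intg(2)[OF ihY hF Ym, symmetric])
    also have "\<dots> = (\<integral>x. (h x)^2 \<partial>N)"
      by (rule integral_cong_AE) (use hm in \<open>auto simp: power2_eq_square\<close>)
    finally show ?thesis .
  qed
  have "(\<integral>x. (Y x - m x)^2 \<partial>N) = (\<integral>x. (Y x - h x)^2 \<partial>N)"
    by (rule integral_cong_AE) (use hm in auto)
  also have "\<dots> = (\<integral>x. Y x - 2 * (h x * Y x) + (h x)^2 \<partial>N)"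
  proof (rule Bochner_Integration.integral_cong[OF refl])
    fix x assume "x \<in> space N"
    then show "(Y x - h x)^2 = Y x - 2 * (h x * Y x) + (h x)^2"
      using Yb by (auto simp: power2_eq_square algebra_simps)
  qed
  also have "\<dots> = q - 2 * (\<integral>x. h x * Y x \<partial>N) + (\<integral>x. (h x)^2 \<partial>N)"
    using iY ihY ihh q(1) by simp
  finally have "(\<integral>x. (Y x - m x)^2 \<partial>N) = q - (\<integral>x. (h x)^2 \<partial>N)" using hY by simp
  then have h2: "q*(1+q)/2 \<le> (\<integral>x. (h x)^2 \<partial>N)"
    using hyp unfolding m_def by (simp add: field_simps)
  obtain G where G: "G \<in> sets F" "0 < measure N G" "measure N G < 1"
    "measure N G * (1 - measure N G) * q * (1-q) \<le> 144 * ((\<integral>x. indicator G x * h x \<partial>N) - measure N G * q)^2"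
    using main_split[OF N sub hF hb qh q(2,3) h2] by blast
  have GN[measurable]: "G \<in> sets N" using G sF by auto
  have iGY: "integrable N (\<lambda>x. indicator G x * Y x)"
    by (rule bdd_int[OF fm, where B=1]) (simp, use Yb in \<open>fastforce simp: indicator_def\<close>)
  have indF: "indicator G \<in> borel_measurable F" using G(1) by measurable
  have "(\<integral>x. indicator G x * h x \<partial>N) = (\<integral>x. indicator G x * m x \<partial>N)"
    by (rule integral_cong_AE) (use hm G sF in auto)
  also have "\<dots> = (\<integral>x. indicator G x * Y x \<partial>N)"
    unfolding m_def by (rule real_cond_exp_intg(2)[OF iGY indF Ym])
  finally show ?thesis using G by auto
qed



definition phi :: "real \<Rightarrow> real \<Rightarrow> real" where "phi a b = a * b / (a + b)"

lemma phi_identity0: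
  fixes a1 b1 a0 b0 u1 u0 c :: real
  assumes "u1 = a1 + b1" "u0 = a0 + b0" "c = u1 + u0" "u1 \<noteq> 0" "u0 \<noteq> 0" "c \<noteq> 0"
  shows "a1*b1/u1 + a0*b0/u0 = (a1+a0)*(b1+b0)/c - (a1*(b1+b0) - b1*(a1+a0))^2 / (c*u1*u0)"
proof -
  have "a1*b1/u1 + a0*b0/u0 = (a1*b1*u0*c + a0*b0*u1*c)/(c*u1*u0)" using assms(4-6) by (simp add: field_simps)
  moreover have "(a1+a0)*(b1+b0)/c - (a1*(b1+b0) - b1*(a1+a0))^2 / (c*u1*u0) = ((a1+a0)*(b1+b0)*u1*u0 - (a1*(b1+b0) - b1*(a1+a0))^2) / (c*u1*u0)"
    using assms(4-6) by (simp add: field_simps)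
  moreover have "a1*b1*u0*c + a0*b0*u1*c = (a1+a0)*(b1+b0)*u1*u0 - (a1*(b1+b0) - b1*(a1+a0))^2"
    unfolding assms(1-3) by (simp add: power2_eq_square algebra_simps)
  ultimately show ?thesis by simp
qed

lemma frac_aux:
  fixes u1 u0 c x y :: real
  assumes "0 < u1" "0 < u0" "0 < c"
  shows "x*y/c/144 = (u1*u0*x*y) / (144 * (c*u1*u0))"
  using assms by (simp add: field_simps)

lemma phi_step:
  fixes a1 b1 a0 b0 c :: real
  assumes nn: "0 \<le> a1" "0 \<le> b1" "0 \<le> a0" "0 \<le> b0"
  and u1: "0 < a1 + b1" and u0: "0 < a0 + b0" and c: "c = a1 + b1 + a0 + b0"
  and h: "((a1+b1)/c)*(1-(a1+b1)/c)*((a1+a0)/c)*(1-(a1+a0)/c) \<le> 144*(a1/c - ((a1+b1)/c)*((a1+a0)/c))^2"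
  shows "phi a1 b1 + phi a0 b0 \<le> (143/144) * phi (a1+a0) (b1+b0)"
proof -
  have cpos: "0 < c" using u1 u0 c by simp
  have cc: "c = (a1+b1) + (a0+b0)" "(a1+a0) + (b1+b0) = c" using c by simp_all
  have e1: "1-(a1+b1)/c = (a0+b0)/c" using cpos c by (simp add: diff_divide_distrib[symmetric] divide_simps) 
  have e2: "1-(a1+a0)/c = (b1+b0)/c" using cpos c by (simp add: divide_simps)
  have e3: "a1/c - ((a1+b1)/c)*((a1+a0)/c) = (a1*(b1+b0) - b1*(a1+a0)) / c^2"
  proof -
    have "a1/c - ((a1+b1)/c)*((a1+a0)/c) = (a1*c - (a1+b1)*(a1+a0))/c^2"
      using cpos by (simp add: field_simps power2_eq_square)
    also have "a1*c - (a1+b1)*(a1+a0) = a1*(b1+b0) - b1*(a1+a0)" unfolding c by (simp add: algebra_simps)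
    finally show ?thesis .
  qed
  have "((a1+b1)*(a0+b0)*(a1+a0)*(b1+b0)) / (c*c*c*c) \<le> (144*(a1*(b1+b0) - b1*(a1+a0))^2) / (c*c*c*c)"
    using h unfolding e1 e2 e3 by (simp add: power_divide field_simps power2_eq_square)
  then have H: "(a1+b1)*(a0+b0)*(a1+a0)*(b1+b0) \<le> 144*(a1*(b1+b0) - b1*(a1+a0))^2"
    using cpos by (simp add: divide_le_cancel)
  have D: "0 < c*(a1+b1)*(a0+b0)" using cpos u1 u0 by simp
  have pab: "phi (a1+a0) (b1+b0) = (a1+a0)*(b1+b0)/c" unfolding phi_def cc(2) ..
  have "phi (a1+a0) (b1+b0) / 144 = ((a1+b1)*(a0+b0)*(a1+a0)*(b1+b0)) / (144 * (c*(a1+b1)*(a0+b0)))"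
    unfolding pab using frac_aux[OF u1 u0 cpos, of "a1+a0" "b1+b0"] by (simp only: mult.assoc)
  also have "\<dots> \<le> (144*(a1*(b1+b0) - b1*(a1+a0))^2) / (144 * (c*(a1+b1)*(a0+b0)))"
    using H D by (intro divide_right_mono) auto
  also have "\<dots> = (a1*(b1+b0) - b1*(a1+a0))^2 / (c*(a1+b1)*(a0+b0))" by simp
  finally have X: "phi (a1+a0) (b1+b0) / 144 \<le> (a1*(b1+b0) - b1*(a1+a0))^2 / (c*(a1+b1)*(a0+b0))" .
  have "phi a1 b1 + phi a0 b0 = phi (a1+a0) (b1+b0) - (a1*(b1+b0) - b1*(a1+a0))^2 / (c*(a1+b1)*(a0+b0))"
    unfolding phi_def cc(2) using phi_identity0[OF refl refl cc(1)] u1 u0 cpos by simp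
  then show ?thesis using X by linarith
qed


lemma measure_split_set:
  assumes "finite_measure M" "X \<in> sets M" "Z \<in> sets M"
  shows "measure M X = measure M (X \<inter> Z) + measure M (X - Z)"
proof -
  have "X = (X \<inter> Z) \<union> (X - Z)" by auto
  then have "measure M X = measure M ((X \<inter> Z) \<union> (X - Z))" by simp
  also have "\<dots> = measure M (X \<inter> Z) + measure M (X - Z)"
    using assms by (intro finite_measure.finite_measure_Union) auto
  finally show ?thesis .
qed

lemma gen_step:
  assumes D: "prob_space D" and R: "R \<in> sets D" and Rpos: "0 < measure D R"
  and gm: "Gs \<in> sets D" and Y: "\<And>x. x \<in> space D \<Longrightarrow> Y x = indicator Gs x"
  and sub: "subalgebra (uniform_measure D R) F"
  and q: "q = integral\<^sup>L (uniform_measure D R) Y" "0 < q" "q < 1"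
  and hyp: "(\<integral>x. (Y x - real_cond_exp (uniform_measure D R) F Y x)^2 \<partial>(uniform_measure D R)) \<le> q*(1-q)/2"
  shows "\<exists>G\<in>sets F. phi (measure D (R \<inter> G \<inter> Gs)) (measure D ((R \<inter> G) - Gs))
       + phi (measure D ((R - G) \<inter> Gs)) (measure D ((R - G) - Gs))
     \<le> 143/144 * phi (measure D (R \<inter> Gs)) (measure D (R - Gs))"
proof -
  interpret prob_space D by fact
  define N where "N = uniform_measure D R"
  have eR: "emeasure D R \<noteq> 0" "emeasure D R \<noteq> \<infinity>" using Rpos by (auto simp: measure_def)
  have N: "prob_space N" unfolding N_def by (rule prob_space_uniform_measure[OF eR])
  have sN[simp]: "sets N = sets D" "space N = space D" unfolding N_def by auto
  have Ym: "Y \<in> borel_measurable N"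
  proof -
    have i: "(indicator Gs :: _ \<Rightarrow> real) \<in> borel_measurable D" using gm by (rule borel_measurable_indicator)
    have "Y \<in> borel_measurable D \<longleftrightarrow> (indicator Gs :: _ \<Rightarrow> real) \<in> borel_measurable D" by (rule measurable_cong) (rule Y)
    with i have "Y \<in> borel_measurable D" by blast
    moreover have "measurable N borel = measurable D borel" by (rule measurable_cong_sets) auto
    ultimately show ?thesis by metis
  qed
  have Yb: "\<And>x. x\<in>space N \<Longrightarrow> Y x = 0 \<or> Y x = 1" using Y by (simp add: indicator_def)
  obtain G where G: "G \<in> sets F" "0 < measure N G" "measure N G < 1"
     "measure N G * (1 - measure N G) * q * (1-q) \<le> 144 * ((\<integral>x. indicator G x * Y x \<partial>N) - measure N G * q)^2"
    using cond_split[OF N sub[folded N_def] Ym Yb q[folded N_def] hyp[folded N_def]] by blast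
  have GD: "G \<in> sets D" using G(1) sub unfolding subalgebra_def N_def by auto
  define c where "c = measure D R"
  define a1 where "a1 = measure D (R \<inter> G \<inter> Gs)"
  define b1 where "b1 = measure D ((R \<inter> G) - Gs)"
  define a0 where "a0 = measure D ((R - G) \<inter> Gs)"
  define b0 where "b0 = measure D ((R - G) - Gs)"
  have fm: "finite_measure D" by unfold_locales
  have RG: "measure D (R \<inter> G) = a1 + b1" unfolding a1_def b1_def
    by (rule measure_split_set[OF fm]) (use R GD gm in auto)
  have RmG: "measure D (R - G) = a0 + b0" unfolding a0_def b0_def
    by (rule measure_split_set[OF fm]) (use R GD gm in auto)
  have cc: "c = measure D (R \<inter> G) + measure D (R - G)" unfolding c_def
    by (rule measure_split_set[OF fm]) (use R GD gm in auto)
  have RGs: "measure D (R \<inter> Gs) = a1 + a0"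
  proof -
    have "measure D (R \<inter> Gs) = measure D (R \<inter> Gs \<inter> G) + measure D (R \<inter> Gs - G)"
      by (rule measure_split_set[OF fm]) (use R GD gm in auto)
    moreover have "R \<inter> Gs \<inter> G = R \<inter> G \<inter> Gs" "R \<inter> Gs - G = (R - G) \<inter> Gs" by auto
    ultimately show ?thesis unfolding a1_def a0_def by simp
  qed
  have RmGs: "measure D (R - Gs) = b1 + b0"
  proof -
    have "measure D (R - Gs) = measure D ((R - Gs) \<inter> G) + measure D ((R - Gs) - G)"
      by (rule measure_split_set[OF fm]) (use R GD gm in auto)
    moreover have "(R - Gs) \<inter> G = (R \<inter> G) - Gs" "(R - Gs) - G = (R - G) - Gs" by auto
    ultimately show ?thesis unfolding b1_def b0_def by simp
  qed
  have c: "c = a1 + b1 + a0 + b0" using cc RG RmG by simp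
  have cpos: "0 < c" using Rpos c_def by simp
  have mNG: "measure N G = (a1 + b1) / c"
    unfolding N_def c_def using RG GD eR by simp
  have YG: "(\<integral>x. indicator G x * Y x \<partial>N) = a1 / c"
  proof -
    have "(\<integral>x. indicator G x * Y x \<partial>N) = (\<integral>x. indicator (G \<inter> Gs) x \<partial>N)"
      by (rule Bochner_Integration.integral_cong[OF refl]) (simp add: Y indicator_def)
    also have "\<dots> = measure N (G \<inter> Gs)" using GD gm sets.sets_into_space by (simp add: Int_absorb2 Int_assoc)
    also have "\<dots> = a1 / c" unfolding N_def c_def a1_def using GD gm eR by (simp add: Int_assoc)
    finally show ?thesis .
  qed
  have qv: "q = (a1 + a0) / c"
  proof -
    have "q = (\<integral>x. indicator Gs x \<partial>N)" unfolding q(1) N_def[symmetric]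
      by (rule Bochner_Integration.integral_cong[OF refl]) (simp add: Y)
    also have "\<dots> = measure N Gs" using gm sets.sets_into_space by (simp add: Int_absorb2)
    also have "\<dots> = (a1 + a0) / c" unfolding N_def c_def using gm eR RGs by simp
    finally show ?thesis .
  qed
  have nn: "0 \<le> a1" "0 \<le> b1" "0 \<le> a0" "0 \<le> b0" unfolding a1_def b1_def a0_def b0_def by auto
  have u1: "0 < a1 + b1" using G(2) mNG cpos by (simp add: zero_less_divide_iff)
  have u0: "0 < a0 + b0"
  proof -
    have "(a1+b1)/c < 1" using G(3) mNG by simp
    then have "a1 + b1 < c" using cpos by simp
    then show ?thesis using c by simp
  qed
  have "phi a1 b1 + phi a0 b0 \<le> (143/144) * phi (a1+a0) (b1+b0)"
    by (rule phi_step[OF nn u1 u0 c]) (use G(4) in \<open>simp only: mNG YG qv\<close>)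
  then show ?thesis using G(1) RGs RmGs unfolding a1_def b1_def a0_def b0_def by auto
qed



lemma space_D:
  assumes "sets D = sets (M1 \<Otimes>\<^sub>M M2)"
  shows "space D = space M1 \<times> space M2"
  using sets_eq_imp_space_eq[OF assms] by (simp add: space_pair_measure)

lemma rs_inst:
  assumes rs: "rectangle_substitutes M1 M2 g D"
  and S: "S \<in> sets M1" and T: "T \<in> sets M2" and Rpos: "0 < measure D (S \<times> T)"
  shows "(\<integral>x. (Yval g x - real_cond_exp (uniform_measure D (S \<times> T)) (vimage_algebra (space D) snd M2) (Yval g) x)^2 \<partial>uniform_measure D (S \<times> T))
       - (\<integral>x. (Yval g x - Yval g x)^2 \<partial>uniform_measure D (S \<times> T))
      \<le> (\<integral>x. (Yval g x - integral\<^sup>L (uniform_measure D (S \<times> T)) (Yval g))^2 \<partial>uniform_measure D (S \<times> T))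
       - (\<integral>x. (Yval g x - real_cond_exp (uniform_measure D (S \<times> T)) (vimage_algebra (space D) fst M1) (Yval g) x)^2 \<partial>uniform_measure D (S \<times> T))"
  using rs[unfolded rectangle_substitutes_def Let_def, rule_format, OF S T Rpos] .

lemma one_step:
  assumes D: "prob_space D" and sD: "sets D = sets (M1 \<Otimes>\<^sub>M M2)"
  and gm: "g \<in> (M1 \<Otimes>\<^sub>M M2) \<rightarrow>\<^sub>M count_space UNIV"
  and rs: "rectangle_substitutes M1 M2 g D"
  and S: "S \<in> sets M1" and T: "T \<in> sets M2"
  and pos: "0 < measure D (S \<times> T \<inter> {\<omega>\<in>space D. g \<omega>})"
  and neg: "0 < measure D (S \<times> T - {\<omega>\<in>space D. g \<omega>})"
  shows "(\<exists>A\<in>sets M1. A \<subseteq> S \<and>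
            phi (measure D (A \<times> T \<inter> {\<omega>\<in>space D. g \<omega>})) (measure D (A \<times> T - {\<omega>\<in>space D. g \<omega>}))
          + phi (measure D ((S - A) \<times> T \<inter> {\<omega>\<in>space D. g \<omega>})) (measure D ((S - A) \<times> T - {\<omega>\<in>space D. g \<omega>}))
          \<le> 143/144 * phi (measure D (S \<times> T \<inter> {\<omega>\<in>space D. g \<omega>})) (measure D (S \<times> T - {\<omega>\<in>space D. g \<omega>})))
       \<or> (\<exists>B\<in>sets M2. B \<subseteq> T \<and>
            phi (measure D (S \<times> B \<inter> {\<omega>\<in>space D. g \<omega>})) (measure D (S \<times> B - {\<omega>\<in>space D. g \<omega>}))
          + phi (measure D (S \<times> (T - B) \<inter> {\<omega>\<in>space D. g \<omega>})) (measure D (S \<times> (T - B) - {\<omega>\<in>space D. g \<omega>}))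
          \<le> 143/144 * phi (measure D (S \<times> T \<inter> {\<omega>\<in>space D. g \<omega>})) (measure D (S \<times> T - {\<omega>\<in>space D. g \<omega>})))"
proof -
  interpret prob_space D by fact
  define Gs where "Gs = {\<omega>\<in>space D. g \<omega>}"
  define R where "R = S \<times> T"
  have spD: "space D = space M1 \<times> space M2" by (rule space_D[OF sD])
  have RD: "R \<in> sets D" unfolding R_def sD by (rule pair_measureI[OF S T])
  have Rsp: "R \<subseteq> space D" unfolding R_def spD using sets.sets_into_space[OF S] sets.sets_into_space[OF T] by auto
  have GsD: "Gs \<in> sets D"
  proof -
    have "{\<omega>\<in>space (M1 \<Otimes>\<^sub>M M2). g \<omega>} \<in> sets (M1 \<Otimes>\<^sub>M M2)" using gm by measurable
    then show ?thesis unfolding Gs_def sD using sets_eq_imp_space_eq[OF sD] by simp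
  qed
  have fm: "finite_measure D" by unfold_locales
  have cR: "measure D R = measure D (R \<inter> Gs) + measure D (R - Gs)"
    by (rule measure_split_set[OF fm RD GsD])
  have Rpos: "0 < measure D R" using cR pos neg unfolding R_def Gs_def by simp
  have eR: "emeasure D R \<noteq> 0" "emeasure D R \<noteq> \<infinity>" using Rpos by (auto simp: measure_def)
  define N where "N = uniform_measure D R"
  have N: "prob_space N" unfolding N_def by (rule prob_space_uniform_measure[OF eR])
  have sN[simp]: "sets N = sets D" "space N = space D" unfolding N_def by auto
  define Y where "Y = Yval g"
  have Yind: "\<And>x. x \<in> space D \<Longrightarrow> Y x = indicator Gs x" unfolding Y_def Yval_def Gs_def by (simp add: indicator_def)
  have Ym: "Y \<in> borel_measurable N"
  proof -
    have i: "(indicator Gs :: _ \<Rightarrow> real) \<in> borel_measurable D" using GsD by (rule borel_measurable_indicator)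
    have "Y \<in> borel_measurable D \<longleftrightarrow> (indicator Gs :: _ \<Rightarrow> real) \<in> borel_measurable D" by (rule measurable_cong) (rule Yind)
    with i have "Y \<in> borel_measurable D" by blast
    moreover have "measurable N borel = measurable D borel" by (rule measurable_cong_sets) auto
    ultimately show ?thesis by metis
  qed
  define q where "q = integral\<^sup>L N Y"
  have qv: "q = measure D (R \<inter> Gs) / measure D R"
  proof -
    have "q = (\<integral>x. indicator Gs x \<partial>N)" unfolding q_def
      by (rule Bochner_Integration.integral_cong[OF refl]) (simp add: Yind)
    also have "\<dots> = measure N Gs" using GsD sets.sets_into_space by (simp add: Int_absorb2)
    also have "\<dots> = measure D (R \<inter> Gs) / measure D R" unfolding N_def using GsD eR by simp
    finally show ?thesis .
  qed
  have q0: "0 < q" unfolding qv using pos Rpos unfolding R_def Gs_def by simp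
  have q1: "q < 1" unfolding qv using neg Rpos cR unfolding R_def Gs_def by simp
  have fmN: "finite_measure N" using N by (simp add: prob_space_def)
  have iY: "integrable N Y" by (rule bdd_int[OF fmN Ym, where B=1]) (simp add: Yind indicator_def)
  have var: "(\<integral>x. (Y x - q)^2 \<partial>N) = q * (1 - q)"
  proof -
    have "(\<integral>x. (Y x - q)^2 \<partial>N) = (\<integral>x. (1 - 2*q) * Y x + q^2 \<partial>N)"
      by (rule Bochner_Integration.integral_cong[OF refl]) (auto simp: Yind indicator_def power2_eq_square algebra_simps)
    also have "\<dots> = (\<integral>x. (1 - 2*q) * Y x \<partial>N) + (\<integral>x. q^2 \<partial>N)"
      by (rule Bochner_Integration.integral_add) (use iY fmN in \<open>auto simp: finite_measure.integrable_const\<close>)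
    also have "\<dots> = (1 - 2*q) * q + q^2" using prob_space.prob_space[OF N] by (simp add: q_def)
    finally show ?thesis by (simp add: power2_eq_square algebra_simps)
  qed
  define F1 where "F1 = vimage_algebra (space D) fst M1"
  define F2 where "F2 = vimage_algebra (space D) snd M2"
  have rs': "(\<integral>x. (Y x - real_cond_exp N F2 Y x)^2 \<partial>N) - (\<integral>x. (Y x - Y x)^2 \<partial>N)
      \<le> (\<integral>x. (Y x - integral\<^sup>L N Y)^2 \<partial>N) - (\<integral>x. (Y x - real_cond_exp N F1 Y x)^2 \<partial>N)"
    using rs_inst[OF rs S T Rpos[unfolded R_def]] unfolding N_def Y_def F1_def F2_def R_def .
  define IA where "IA = (\<integral>x. (Y x - real_cond_exp N F1 Y x)^2 \<partial>N)"
  define IB where "IB = (\<integral>x. (Y x - real_cond_exp N F2 Y x)^2 \<partial>N)"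
  have IAB: "IA + IB \<le> q * (1-q)" using rs' var unfolding IA_def IB_def q_def by simp
  have IA0: "0 \<le> IA" "0 \<le> IB" unfolding IA_def IB_def by auto
  have fstm: "fst \<in> measurable N M1"
  proof -
    have "measurable N M1 = measurable (M1 \<Otimes>\<^sub>M M2) M1" by (rule measurable_cong_sets) (auto simp: sD)
    then show ?thesis by simp
  qed
  have sndm: "snd \<in> measurable N M2"
  proof -
    have "measurable N M2 = measurable (M1 \<Otimes>\<^sub>M M2) M2" by (rule measurable_cong_sets) (auto simp: sD)
    then show ?thesis by simp
  qed
  have sub1: "subalgebra N F1" unfolding subalgebra_def F1_def
    using sets_image_in_sets[OF _ fstm, of "space D"] by simp
  have sub2: "subalgebra N F2" unfolding subalgebra_def F2_def
    using sets_image_in_sets[OF _ sndm, of "space D"] by simp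
  have fstsp: "fst \<in> space D \<rightarrow> space M1" and sndsp: "snd \<in> space D \<rightarrow> space M2" unfolding spD by auto
  have phiR: "phi (measure D (S \<times> T \<inter> Gs)) (measure D (S \<times> T - Gs)) = phi (measure D (R \<inter> Gs)) (measure D (R - Gs))"
    unfolding R_def ..
  show ?thesis
  proof (cases "IA \<le> q*(1-q)/2")
    case True
    obtain G where G: "G \<in> sets F1" "phi (measure D (R \<inter> G \<inter> Gs)) (measure D ((R \<inter> G) - Gs))
       + phi (measure D ((R - G) \<inter> Gs)) (measure D ((R - G) - Gs))
       \<le> 143/144 * phi (measure D (R \<inter> Gs)) (measure D (R - Gs))"
      using gen_step[OF D RD Rpos GsD Yind sub1[unfolded N_def] q_def[unfolded N_def] q0 q1] True
      unfolding IA_def N_def by blast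
    obtain A0 where A0: "A0 \<in> sets M1" "G = fst -` A0 \<inter> space D"
      using G(1) unfolding F1_def sets_vimage_algebra2[OF fstsp] by blast
    define A where "A = A0 \<inter> S"
    have AS: "A \<in> sets M1" "A \<subseteq> S" unfolding A_def using A0 S by auto
    have e1: "R \<inter> G = A \<times> T" unfolding R_def A0(2) A_def using Rsp[unfolded R_def] by auto
    have e2: "R - G = (S - A) \<times> T" unfolding R_def A0(2) A_def using Rsp[unfolded R_def] by auto
    have X: "phi (measure D (A \<times> T \<inter> Gs)) (measure D (A \<times> T - Gs))
       + phi (measure D ((S - A) \<times> T \<inter> Gs)) (measure D ((S - A) \<times> T - Gs))
       \<le> 143/144 * phi (measure D (R \<inter> Gs)) (measure D (R - Gs))"
      using G(2) unfolding e1 e2 .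
    show ?thesis using X AS unfolding Gs_def R_def by blast
  next
    case False
    then have True: "IB \<le> q*(1-q)/2" using IAB by simp
    obtain G where G: "G \<in> sets F2" "phi (measure D (R \<inter> G \<inter> Gs)) (measure D ((R \<inter> G) - Gs))
       + phi (measure D ((R - G) \<inter> Gs)) (measure D ((R - G) - Gs))
       \<le> 143/144 * phi (measure D (R \<inter> Gs)) (measure D (R - Gs))"
      using gen_step[OF D RD Rpos GsD Yind sub2[unfolded N_def] q_def[unfolded N_def] q0 q1] True
      unfolding IB_def N_def by blast
    obtain B0 where B0: "B0 \<in> sets M2" "G = snd -` B0 \<inter> space D"
      using G(1) unfolding F2_def sets_vimage_algebra2[OF sndsp] by blast
    define B where "B = B0 \<inter> T"
    have BT: "B \<in> sets M2" "B \<subseteq> T" unfolding B_def using B0 T by auto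
    have e1: "R \<inter> G = S \<times> B" unfolding R_def B0(2) B_def using Rsp[unfolded R_def] by auto
    have e2: "R - G = S \<times> (T - B)" unfolding R_def B0(2) B_def using Rsp[unfolded R_def] by auto
    have X: "phi (measure D (S \<times> B \<inter> Gs)) (measure D (S \<times> B - Gs))
       + phi (measure D (S \<times> (T - B) \<inter> Gs)) (measure D (S \<times> (T - B) - Gs))
       \<le> 143/144 * phi (measure D (R \<inter> Gs)) (measure D (R - Gs))"
      using G(2) unfolding e1 e2 .
    show ?thesis using X BT unfolding Gs_def R_def by blast
  qed
qed



lemma run_meas:
  "protocol_measurable M1 M2 P \<Longrightarrow> (\<lambda>\<omega>. run_protocol P (fst \<omega>) (snd \<omega>)) \<in> (M1 \<Otimes>\<^sub>M M2) \<rightarrow>\<^sub>M count_space UNIV"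
proof (induction P)
  case (Output b)
  then show ?case by simp
next
  case (AliceSends f p q)
  then have [measurable]: "f \<in> M1 \<rightarrow>\<^sub>M count_space UNIV"
    "(\<lambda>\<omega>. run_protocol p (fst \<omega>) (snd \<omega>)) \<in> (M1 \<Otimes>\<^sub>M M2) \<rightarrow>\<^sub>M count_space UNIV"
    "(\<lambda>\<omega>. run_protocol q (fst \<omega>) (snd \<omega>)) \<in> (M1 \<Otimes>\<^sub>M M2) \<rightarrow>\<^sub>M count_space UNIV" by auto
  show ?case by simp measurable
next
  case (BobSends f p q)
  then have [measurable]: "f \<in> M2 \<rightarrow>\<^sub>M count_space UNIV"
    "(\<lambda>\<omega>. run_protocol p (fst \<omega>) (snd \<omega>)) \<in> (M1 \<Otimes>\<^sub>M M2) \<rightarrow>\<^sub>M count_space UNIV"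
    "(\<lambda>\<omega>. run_protocol q (fst \<omega>) (snd \<omega>)) \<in> (M1 \<Otimes>\<^sub>M M2) \<rightarrow>\<^sub>M count_space UNIV" by auto
  show ?case by simp measurable
qed

lemma err_set_meas:
  assumes sD: "sets D = sets (M1 \<Otimes>\<^sub>M M2)"
  and gm: "g \<in> (M1 \<Otimes>\<^sub>M M2) \<rightarrow>\<^sub>M count_space UNIV"
  and P: "protocol_measurable M1 M2 P" and S: "S \<in> sets M1" and T: "T \<in> sets M2"
  shows "{\<omega> \<in> S \<times> T. run_protocol P (fst \<omega>) (snd \<omega>) \<noteq> g \<omega>} \<in> sets D"
proof -
  have [measurable]: "(\<lambda>\<omega>. run_protocol P (fst \<omega>) (snd \<omega>)) \<in> (M1 \<Otimes>\<^sub>M M2) \<rightarrow>\<^sub>M count_space UNIV"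
    using run_meas[OF P] .
  note gm[measurable]
  have ST: "S \<times> T \<in> sets (M1 \<Otimes>\<^sub>M M2)" using S T by (rule pair_measureI)
  have "{\<omega> \<in> space (M1 \<Otimes>\<^sub>M M2). run_protocol P (fst \<omega>) (snd \<omega>) \<noteq> g \<omega>} \<in> sets (M1 \<Otimes>\<^sub>M M2)"
    by measurable
  then have "S \<times> T \<inter> {\<omega> \<in> space (M1 \<Otimes>\<^sub>M M2). run_protocol P (fst \<omega>) (snd \<omega>) \<noteq> g \<omega>} \<in> sets (M1 \<Otimes>\<^sub>M M2)"
    using ST by blast
  moreover have "S \<times> T \<inter> {\<omega> \<in> space (M1 \<Otimes>\<^sub>M M2). run_protocol P (fst \<omega>) (snd \<omega>) \<noteq> g \<omega>}
     = {\<omega> \<in> S \<times> T. run_protocol P (fst \<omega>) (snd \<omega>) \<noteq> g \<omega>}"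
    using sets.sets_into_space[OF ST] by auto
  ultimately show ?thesis unfolding sD by simp
qed

definition PhiR :: "('s \<times> 't) measure \<Rightarrow> ('s \<times> 't \<Rightarrow> bool) \<Rightarrow> 's set \<Rightarrow> 't set \<Rightarrow> real" where
  "PhiR D g S T = phi (measure D (S \<times> T \<inter> {\<omega>\<in>space D. g \<omega>})) (measure D (S \<times> T - {\<omega>\<in>space D. g \<omega>}))"

definition errR :: "('s \<times> 't) measure \<Rightarrow> ('s \<times> 't \<Rightarrow> bool) \<Rightarrow> ('s,'t) protocol \<Rightarrow> 's set \<Rightarrow> 't set \<Rightarrow> real" where
  "errR D g P S T = measure D {\<omega> \<in> S \<times> T. run_protocol P (fst \<omega>) (snd \<omega>) \<noteq> g \<omega>}"

lemma phi_nonneg: "0 \<le> a \<Longrightarrow> 0 \<le> b \<Longrightarrow> 0 \<le> phi a b"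
  unfolding phi_def by simp

lemma min_le_phi: "0 \<le> a \<Longrightarrow> 0 \<le> b \<Longrightarrow> min a b \<le> 2 * phi a b"
proof -
  assume a: "0 \<le> a" and b: "0 \<le> b"
  show ?thesis
  proof (cases "a + b = 0")
    case True then show ?thesis using a b unfolding phi_def by simp
  next
    case False
    then have ab: "0 < a + b" using a b by simp
    have "min a b * (a + b) \<le> 2 * (a * b)"
    proof (cases "a \<le> b")
      case True
      then have "a * a \<le> a * b" using a by (intro mult_left_mono) auto
      then show ?thesis using True by (simp add: algebra_simps)
    next
      case False
      then have "b * b \<le> a * b" using b by (intro mult_right_mono) auto
      then show ?thesis using False by (simp add: algebra_simps)
    qed
    then show ?thesis unfolding phi_def using ab by (simp add: field_simps)
  qed
qed

lemma base_err:
  assumes sD: "sets D = sets (M1 \<Otimes>\<^sub>M M2)" and S: "S \<in> sets M1" and T: "T \<in> sets M2"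
  shows "errR D g (Output (measure D (S \<times> T - {\<omega>\<in>space D. g \<omega>}) \<le> measure D (S \<times> T \<inter> {\<omega>\<in>space D. g \<omega>}))) S T
     \<le> 2 * PhiR D g S T"
proof -
  have spD: "space D = space M1 \<times> space M2" by (rule space_D[OF sD])
  have sub: "S \<times> T \<subseteq> space D" unfolding spD using sets.sets_into_space[OF S] sets.sets_into_space[OF T] by auto
  define a where "a = measure D (S \<times> T \<inter> {\<omega>\<in>space D. g \<omega>})"
  define b where "b = measure D (S \<times> T - {\<omega>\<in>space D. g \<omega>})"
  have e1: "{\<omega> \<in> S \<times> T. \<not> g \<omega>} = S \<times> T - {\<omega>\<in>space D. g \<omega>}" using sub by auto
  have e2: "{\<omega> \<in> S \<times> T. g \<omega>} = S \<times> T \<inter> {\<omega>\<in>space D. g \<omega>}" using sub by auto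
  have "errR D g (Output (b \<le> a)) S T = min a b"
    unfolding errR_def by (cases "b \<le> a") (simp_all only: e1 e2 a_def b_def min_def run_protocol.simps simp_thms, auto)
  also have "\<dots> \<le> 2 * phi a b" by (rule min_le_phi) (auto simp: a_def b_def)
  finally show ?thesis unfolding PhiR_def a_def b_def .
qed



lemma err_split_A:
  assumes D: "prob_space D" and sD: "sets D = sets (M1 \<Otimes>\<^sub>M M2)"
  and gm: "g \<in> (M1 \<Otimes>\<^sub>M M2) \<rightarrow>\<^sub>M count_space UNIV"
  and P1: "protocol_measurable M1 M2 P1" and P2: "protocol_measurable M1 M2 P2"
  and A: "A \<in> sets M1" "A \<subseteq> S" and S: "S \<in> sets M1" and T: "T \<in> sets M2"
  shows "errR D g (AliceSends (\<lambda>s. s \<in> A) P1 P2) S T = errR D g P1 A T + errR D g P2 (S - A) T"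
proof -
  interpret prob_space D by fact
  have SA: "S - A \<in> sets M1" using A S by auto
  have "{\<omega> \<in> S \<times> T. run_protocol (AliceSends (\<lambda>s. s \<in> A) P1 P2) (fst \<omega>) (snd \<omega>) \<noteq> g \<omega>}
      = {\<omega> \<in> A \<times> T. run_protocol P1 (fst \<omega>) (snd \<omega>) \<noteq> g \<omega>} \<union> {\<omega> \<in> (S - A) \<times> T. run_protocol P2 (fst \<omega>) (snd \<omega>) \<noteq> g \<omega>}"
    using A by auto
  moreover have "measure D ({\<omega> \<in> A \<times> T. run_protocol P1 (fst \<omega>) (snd \<omega>) \<noteq> g \<omega>} \<union> {\<omega> \<in> (S - A) \<times> T. run_protocol P2 (fst \<omega>) (snd \<omega>) \<noteq> g \<omega>})
     = measure D {\<omega> \<in> A \<times> T. run_protocol P1 (fst \<omega>) (snd \<omega>) \<noteq> g \<omega>} + measure D {\<omega> \<in> (S - A) \<times> T. run_protocol P2 (fst \<omega>) (snd \<omega>) \<noteq> g \<omega>}"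
    by (rule finite_measure_Union[OF err_set_meas[OF sD gm P1 A(1) T] err_set_meas[OF sD gm P2 SA T]]) auto
  ultimately show ?thesis unfolding errR_def by simp
qed

lemma err_split_B:
  assumes D: "prob_space D" and sD: "sets D = sets (M1 \<Otimes>\<^sub>M M2)"
  and gm: "g \<in> (M1 \<Otimes>\<^sub>M M2) \<rightarrow>\<^sub>M count_space UNIV"
  and P1: "protocol_measurable M1 M2 P1" and P2: "protocol_measurable M1 M2 P2"
  and B: "B \<in> sets M2" "B \<subseteq> T" and S: "S \<in> sets M1" and T: "T \<in> sets M2"
  shows "errR D g (BobSends (\<lambda>t. t \<in> B) P1 P2) S T = errR D g P1 S B + errR D g P2 S (T - B)"
proof -
  interpret prob_space D by fact
  have TB: "T - B \<in> sets M2" using B T by auto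
  have "{\<omega> \<in> S \<times> T. run_protocol (BobSends (\<lambda>t. t \<in> B) P1 P2) (fst \<omega>) (snd \<omega>) \<noteq> g \<omega>}
      = {\<omega> \<in> S \<times> B. run_protocol P1 (fst \<omega>) (snd \<omega>) \<noteq> g \<omega>} \<union> {\<omega> \<in> S \<times> (T - B). run_protocol P2 (fst \<omega>) (snd \<omega>) \<noteq> g \<omega>}"
    using B by auto
  moreover have "measure D ({\<omega> \<in> S \<times> B. run_protocol P1 (fst \<omega>) (snd \<omega>) \<noteq> g \<omega>} \<union> {\<omega> \<in> S \<times> (T - B). run_protocol P2 (fst \<omega>) (snd \<omega>) \<noteq> g \<omega>})
     = measure D {\<omega> \<in> S \<times> B. run_protocol P1 (fst \<omega>) (snd \<omega>) \<noteq> g \<omega>} + measure D {\<omega> \<in> S \<times> (T - B). run_protocol P2 (fst \<omega>) (snd \<omega>) \<noteq> g \<omega>}"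
    by (rule finite_measure_Union[OF err_set_meas[OF sD gm P1 S B(1)] err_set_meas[OF sD gm P2 S TB]]) auto
  ultimately show ?thesis unfolding errR_def by simp
qed

lemma claim:
  assumes D: "prob_space D" and sD: "sets D = sets (M1 \<Otimes>\<^sub>M M2)"
  and gm: "g \<in> (M1 \<Otimes>\<^sub>M M2) \<rightarrow>\<^sub>M count_space UNIV"
  and rs: "rectangle_substitutes M1 M2 g D"
  shows "\<forall>S T. S \<in> sets M1 \<longrightarrow> T \<in> sets M2 \<longrightarrow> (\<exists>P. protocol_measurable M1 M2 P \<and> protocol_cost P \<le> k
           \<and> errR D g P S T \<le> 2 * (143/144)^k * PhiR D g S T)"
proof (induction k)
  case 0
  show ?case
  proof (intro allI impI)
    fix S T assume S: "S \<in> sets M1" and T: "T \<in> sets M2"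
    show "\<exists>P. protocol_measurable M1 M2 P \<and> protocol_cost P \<le> 0 \<and> errR D g P S T \<le> 2 * (143/144)^0 * PhiR D g S T"
      using base_err[OF sD S T, of g]
      by (intro exI[of _ "Output (measure D (S \<times> T - {\<omega>\<in>space D. g \<omega>}) \<le> measure D (S \<times> T \<inter> {\<omega>\<in>space D. g \<omega>}))"]) simp
  qed
next
  case (Suc k)
  show ?case
  proof (intro allI impI)
    fix S T assume S: "S \<in> sets M1" and T: "T \<in> sets M2"
    define a where "a = measure D (S \<times> T \<inter> {\<omega>\<in>space D. g \<omega>})"
    define b where "b = measure D (S \<times> T - {\<omega>\<in>space D. g \<omega>})"
    have ab0: "0 \<le> a" "0 \<le> b" unfolding a_def b_def by auto
    have Phi: "PhiR D g S T = phi a b" unfolding PhiR_def a_def b_def ..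
    have rk: "0 \<le> (143/144::real)^k" by simp
    show "\<exists>P. protocol_measurable M1 M2 P \<and> protocol_cost P \<le> Suc k \<and> errR D g P S T \<le> 2 * (143/144)^(Suc k) * PhiR D g S T"
    proof (cases "0 < a \<and> 0 < b")
      case False
      then have "a = 0 \<or> b = 0" using ab0 by auto
      then have "phi a b = 0" unfolding phi_def by auto
      have "errR D g (Output (b \<le> a)) S T \<le> 2 * PhiR D g S T"
        using base_err[OF sD S T, of g] unfolding a_def b_def .
      then have "errR D g (Output (b \<le> a)) S T \<le> 2 * (143/144)^(Suc k) * PhiR D g S T"
        using Phi \<open>phi a b = 0\<close> by simp
      then show ?thesis by (intro exI[of _ "Output (b \<le> a)"]) simp
    next
      case True
      have ta: "0 < measure D (S \<times> T \<inter> {\<omega>\<in>space D. g \<omega>})" using True a_def by simp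
      have tb: "0 < measure D (S \<times> T - {\<omega>\<in>space D. g \<omega>})" using True b_def by simp
      note os = one_step[OF D sD gm rs S T ta tb]
      then show ?thesis
      proof (elim disjE bexE conjE)
        fix A assume A: "A \<in> sets M1" "A \<subseteq> S" and
          ineq: "phi (measure D (A \<times> T \<inter> {\<omega>\<in>space D. g \<omega>})) (measure D (A \<times> T - {\<omega>\<in>space D. g \<omega>}))
          + phi (measure D ((S - A) \<times> T \<inter> {\<omega>\<in>space D. g \<omega>})) (measure D ((S - A) \<times> T - {\<omega>\<in>space D. g \<omega>}))
          \<le> 143/144 * phi (measure D (S \<times> T \<inter> {\<omega>\<in>space D. g \<omega>})) (measure D (S \<times> T - {\<omega>\<in>space D. g \<omega>}))"
        have SA: "S - A \<in> sets M1" using A S by auto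
        obtain P1 where P1: "protocol_measurable M1 M2 P1" "protocol_cost P1 \<le> k" "errR D g P1 A T \<le> 2 * (143/144)^k * PhiR D g A T"
          using Suc.IH A(1) T by blast
        obtain P2 where P2: "protocol_measurable M1 M2 P2" "protocol_cost P2 \<le> k" "errR D g P2 (S - A) T \<le> 2 * (143/144)^k * PhiR D g (S - A) T"
          using Suc.IH SA T by blast
        have fm: "(\<lambda>s. s \<in> A) \<in> M1 \<rightarrow>\<^sub>M count_space UNIV" using A(1) by measurable
        have "errR D g (AliceSends (\<lambda>s. s \<in> A) P1 P2) S T = errR D g P1 A T + errR D g P2 (S - A) T"
          by (rule err_split_A[OF D sD gm P1(1) P2(1) A S T])
        also have "\<dots> \<le> 2 * (143/144)^k * (PhiR D g A T + PhiR D g (S - A) T)"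
          using P1(3) P2(3) by (simp add: algebra_simps)
        also have "\<dots> \<le> 2 * (143/144)^k * (143/144 * PhiR D g S T)"
          using ineq rk unfolding PhiR_def by (intro mult_left_mono) auto
        also have "\<dots> = 2 * (143/144)^(Suc k) * PhiR D g S T" by simp
        finally show ?thesis using P1 P2 fm by (intro exI[of _ "AliceSends (\<lambda>s. s \<in> A) P1 P2"]) auto
      next
        fix B assume B: "B \<in> sets M2" "B \<subseteq> T" and
          ineq: "phi (measure D (S \<times> B \<inter> {\<omega>\<in>space D. g \<omega>})) (measure D (S \<times> B - {\<omega>\<in>space D. g \<omega>}))
          + phi (measure D (S \<times> (T - B) \<inter> {\<omega>\<in>space D. g \<omega>})) (measure D (S \<times> (T - B) - {\<omega>\<in>space D. g \<omega>}))
          \<le> 143/144 * phi (measure D (S \<times> T \<inter> {\<omega>\<in>space D. g \<omega>})) (measure D (S \<times> T - {\<omega>\<in>space D. g \<omega>}))"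
        have TB: "T - B \<in> sets M2" using B T by auto
        obtain P1 where P1: "protocol_measurable M1 M2 P1" "protocol_cost P1 \<le> k" "errR D g P1 S B \<le> 2 * (143/144)^k * PhiR D g S B"
          using Suc.IH B(1) S by blast
        obtain P2 where P2: "protocol_measurable M1 M2 P2" "protocol_cost P2 \<le> k" "errR D g P2 S (T - B) \<le> 2 * (143/144)^k * PhiR D g S (T - B)"
          using Suc.IH TB S by blast
        have fm: "(\<lambda>t. t \<in> B) \<in> M2 \<rightarrow>\<^sub>M count_space UNIV" using B(1) by measurable
        have "errR D g (BobSends (\<lambda>t. t \<in> B) P1 P2) S T = errR D g P1 S B + errR D g P2 S (T - B)"
          by (rule err_split_B[OF D sD gm P1(1) P2(1) B S T])
        also have "\<dots> \<le> 2 * (143/144)^k * (PhiR D g S B + PhiR D g S (T - B))"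
          using P1(3) P2(3) by (simp add: algebra_simps)
        also have "\<dots> \<le> 2 * (143/144)^k * (143/144 * PhiR D g S T)"
          using ineq rk unfolding PhiR_def by (intro mult_left_mono) auto
        also have "\<dots> = 2 * (143/144)^(Suc k) * PhiR D g S T" by simp
        finally show ?thesis using P1 P2 fm by (intro exI[of _ "BobSends (\<lambda>t. t \<in> B) P1 P2"]) auto
      qed
    qed
  qed
qed



lemma rho_pow:
  fixes \<delta> :: real
  assumes "0 < \<delta>" "\<delta> < 1"
  shows "(143/144::real) ^ nat \<lceil>144 * ln (1/\<delta>)\<rceil> \<le> \<delta>"
proof -
  define L where "L = ln (1/\<delta>)"
  define k where "k = nat \<lceil>144 * L\<rceil>"
  have L0: "0 < L" unfolding L_def using assms by simp
  have kL: "144 * L \<le> real k" unfolding k_def using L0 by (simp add: of_nat_nat)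
  have r: "(143/144::real) \<le> exp (-1/144)" using exp_ge_add_one_self[of "-1/144::real"] by simp
  have "(143/144::real) ^ k \<le> exp (-1/144) ^ k" by (rule power_mono[OF r]) simp
  also have "\<dots> = exp (real k * (-1/144))" by (rule exp_of_nat_mult[symmetric])
  also have "\<dots> \<le> exp (-L)" using kL by simp
  also have "\<dots> = \<delta>" unfolding L_def using assms by (simp add: ln_div)
  finally show ?thesis unfolding k_def L_def .
qed

lemma cost_bound:
  fixes \<delta> :: real
  assumes "0 < \<delta>" "\<delta> < 1"
  shows "real (nat \<lceil>144 * ln (1/\<delta>)\<rceil>) \<le> 145 * (1 + ln (1 / \<delta>))"
proof -
  define L where "L = ln (1/\<delta>)"
  have L0: "0 < L" unfolding L_def using assms by simp
  have "real (nat \<lceil>144 * L\<rceil>) = real_of_int \<lceil>144 * L\<rceil>" using L0 by (simp add: of_nat_nat)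
  also have "\<dots> \<le> 144 * L + 1" by (rule of_int_ceiling_le_add_one)
  also have "\<dots> \<le> 145 * (1 + L)" using L0 by simp
  finally show ?thesis unfolding L_def .
qed

theorem mainTheorem20:
  "\<exists>C::real. C > 0 \<and>
    (\<forall>(M1::'s measure) (M2::'t measure) (D::('s \<times> 't) measure) (g::'s \<times> 't \<Rightarrow> bool).
      prob_space D \<longrightarrow> sets D = sets (M1 \<Otimes>\<^sub>M M2) \<longrightarrow>
      g \<in> (M1 \<Otimes>\<^sub>M M2) \<rightarrow>\<^sub>M count_space UNIV \<longrightarrow>
      rectangle_substitutes M1 M2 g D \<longrightarrow>
      (\<forall>\<delta>::real. 0 < \<delta> \<and> \<delta> < 1 \<longrightarrow>
        (\<exists>P::('s, 't) protocol.
           protocol_measurable M1 M2 P \<and>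
           real (protocol_cost P) \<le> C * (1 + ln (1 / \<delta>)) \<and>
           measure D {\<omega> \<in> space D. run_protocol P (fst \<omega>) (snd \<omega>) = g \<omega>} \<ge> 1 - \<delta>)))"
proof (intro exI[of _ "145::real"] conjI allI impI)
  show "(0::real) < 145" by simp
  fix M1 :: "'s measure" and M2 :: "'t measure" and D :: "('s \<times> 't) measure" and g :: "'s \<times> 't \<Rightarrow> bool" and \<delta> :: real
  assume D: "prob_space D" and sD: "sets D = sets (M1 \<Otimes>\<^sub>M M2)"
    and gm: "g \<in> (M1 \<Otimes>\<^sub>M M2) \<rightarrow>\<^sub>M count_space UNIV"
    and rs: "rectangle_substitutes M1 M2 g D" and \<delta>: "0 < \<delta> \<and> \<delta> < 1"
  interpret prob_space D by fact
  define k where "k = nat \<lceil>144 * ln (1/\<delta>)\<rceil>"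
  have spD: "space D = space M1 \<times> space M2" by (rule space_D[OF sD])
  obtain P where P: "protocol_measurable M1 M2 P" "protocol_cost P \<le> k"
     "errR D g P (space M1) (space M2) \<le> 2 * (143/144)^k * PhiR D g (space M1) (space M2)"
    using claim[OF D sD gm rs, of k] by blast
  have cost: "real (protocol_cost P) \<le> 145 * (1 + ln (1 / \<delta>))"
    using P(2) cost_bound[of \<delta>] \<delta> unfolding k_def by (meson of_nat_le_iff order_trans)
  define Gs where "Gs = {\<omega>\<in>space D. g \<omega>}"
  define a where "a = measure D (space D \<inter> Gs)"
  define b where "b = measure D (space D - Gs)"
  have GsD: "Gs \<in> sets D"
  proof -
    have "{\<omega>\<in>space (M1 \<Otimes>\<^sub>M M2). g \<omega>} \<in> sets (M1 \<Otimes>\<^sub>M M2)" using gm by measurable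
    then show ?thesis unfolding Gs_def sD using sets_eq_imp_space_eq[OF sD] by simp
  qed
  have ab1: "a + b = 1"
    using measure_split_set[of D "space D" Gs] GsD unfolding a_def b_def
    by (simp add: finite_measure_axioms prob_space)
  have ab0: "0 \<le> a" "0 \<le> b" unfolding a_def b_def by auto
  have Phi4: "PhiR D g (space M1) (space M2) \<le> 1/4"
  proof -
    have "PhiR D g (space M1) (space M2) = a * b" unfolding PhiR_def a_def b_def Gs_def spD[symmetric]
      using ab1[unfolded a_def b_def Gs_def] by (simp add: phi_def)
    also have "a * b \<le> 1/4"
    proof -
      have "0 \<le> (a - b)^2" by simp
      then have "4 * (a*b) \<le> (a+b)^2" by (simp add: power2_eq_square algebra_simps)
      then show ?thesis using ab1 by simp
    qed
    finally show ?thesis .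
  qed
  have rk: "(143/144::real)^k \<le> \<delta>" unfolding k_def using rho_pow \<delta> by blast
  have err: "errR D g P (space M1) (space M2) \<le> \<delta>"
  proof -
    have "2 * (143/144::real)^k * PhiR D g (space M1) (space M2) \<le> 2 * (143/144)^k * (1/4)"
      using Phi4 by (intro mult_left_mono) auto
    also have "\<dots> \<le> \<delta>" using rk \<delta> by simp
    finally show ?thesis using P(3) by linarith
  qed
  define E where "E = {\<omega> \<in> space M1 \<times> space M2. run_protocol P (fst \<omega>) (snd \<omega>) \<noteq> g \<omega>}"
  have ED: "E \<in> sets D" unfolding E_def by (rule err_set_meas[OF sD gm P(1) sets.top sets.top])
  have "{\<omega> \<in> space D. run_protocol P (fst \<omega>) (snd \<omega>) = g \<omega>} = space D - E"
    unfolding E_def spD by auto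
  then have "measure D {\<omega> \<in> space D. run_protocol P (fst \<omega>) (snd \<omega>) = g \<omega>} = 1 - measure D E"
    using prob_compl[OF ED] by simp
  moreover have "measure D E \<le> \<delta>" using err unfolding errR_def E_def .
  ultimately have "1 - \<delta> \<le> measure D {\<omega> \<in> space D. run_protocol P (fst \<omega>) (snd \<omega>) = g \<omega>}" by simp
  then show "\<exists>P::('s, 't) protocol.
           protocol_measurable M1 M2 P \<and>
           real (protocol_cost P) \<le> 145 * (1 + ln (1 / \<delta>)) \<and>
           measure D {\<omega> \<in> space D. run_protocol P (fst \<omega>) (snd \<omega>) = g \<omega>} \<ge> 1 - \<delta>"
    using P(1) cost by blast
qed


end
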